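(* Let $X=(X,d,\mu)$ be a metric measure space with $\mu$ uniformly locally doubling, and let $\theta\ge0$. Then $\mathcal{ADR}_\theta(X)\subset\mathcal{LCR}_\theta(X)$.
   Context: A metric measure space is a triple $X=(X,d,\mu)$ with $(X,d)$ a complete separable metric space and $\mu$ a Borel regular measure with $0<\mu(B)<\infty$ for every ball $B$ and $\operatorname{supp}\mu=X$. All balls are closed: $B_r(x)=\{y:d(x,y)\le r\}$. $\mu$ is uniformly locally doubling if for every $R>0$, $\sup_{r\in(0,R]}\sup_{x}\mu(B_{2r}(x))/\mu(B_r(x))<\infty$. For $\theta\ge0$, $E\subset X$, $\delta\in(0,\infty]$: $\mathcal H_{\theta,\delta}(E)=\inf\{\sum_i\mu(B_{r_i}(x_i))/r_i^\theta:E\subset\bigcup_iB_{r_i}(x_i),\ r_i<\delta\}$ (at most countable coverings by balls), $\mathcal H_\theta(E)=\lim_{\delta\to0}\mathcal H_{\theta,\delta}(E)$. $S\in\mathcal{ADR}_\theta(X)$ (codimension-$\theta$ Ahlfors–David regular) if there are $c_1,c_2>0$ with $c_1\mu(B_r(x))/r^\theta\le\mathcal H_\theta(B_r(x)\cap S)\le c_2\mu(B_r(x))/r^\theta$ for all $x\in S$, $r\in(0,1]$. $S\in\mathcal{LCR}_\theta(X)$ (lower codimension-$\theta$ content regular) if there is $\lambda>0$ with $\mathcal H_{\theta,r}(B_r(x)\cap S)\ge\lambda\mu(B_r(x))/r^\theta$ for all $x\in S$, $r\in(0,1]$. *)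

theory Defs
  imports "HOL-Analysis.Analysis"
begin

text \<open>A metric measure space: the ambient type is a complete separable metric space
  (class polish_space), the measure lives on the Borel sets, and every closed ball
  of positive radius has positive finite measure (hence supp mu = X).\<close>
definition mms :: "'a::polish_space measure \<Rightarrow> bool" where
  "mms M \<longleftrightarrow> sets M = sets borel \<and>
     (\<forall>x r. r > 0 \<longrightarrow> 0 < emeasure M (cball x r) \<and> emeasure M (cball x r) < \<infinity>)"

definition unif_loc_doubling :: "'a::metric_space measure \<Rightarrow> bool" where
  "unif_loc_doubling M \<longleftrightarrow>
     (\<forall>R>0. \<exists>C::real. \<forall>r\<in>{0<..R}. \<forall>x.
        measure M (cball x (2*r)) / measure M (cball x r) \<le> C)"

text \<open>Codimension-theta Hausdorff content at scale delta: infimum over at most countable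
  coverings by closed balls (indexed by a subset I of nat) with radii 0 < r_i < delta.\<close>
definition hcontent :: "'a::metric_space measure \<Rightarrow> real \<Rightarrow> real \<Rightarrow> 'a set \<Rightarrow> ennreal" where
  "hcontent M \<theta> \<delta> E = (INF c \<in> {(I, x, r). (\<forall>i\<in>I. 0 < r i \<and> r i < \<delta>) \<and>
                                         E \<subseteq> (\<Union>i\<in>I. cball (x i) (r i))}.
       (case c of (I, x, r) \<Rightarrow>
          (\<Sum>\<^sub>\<infinity> i\<in>(I::nat set). emeasure M (cball ((x::nat\<Rightarrow>'a) i) ((r::nat\<Rightarrow>real) i)) / ennreal (r i powr \<theta>))))"

text \<open>H_theta(E) = lim_{delta -> 0} H_{theta,delta}(E); the content is antitone in delta,
  so the limit equals the supremum over delta > 0.\<close>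
definition hmeasure :: "'a::metric_space measure \<Rightarrow> real \<Rightarrow> 'a set \<Rightarrow> ennreal" where
  "hmeasure M \<theta> E = (SUP \<delta>\<in>{0<..}. hcontent M \<theta> \<delta> E)"

definition ADR :: "'a::metric_space measure \<Rightarrow> real \<Rightarrow> 'a set set" where
  "ADR M \<theta> = {S. \<exists>c1>0. \<exists>c2>0. \<forall>x\<in>S. \<forall>r\<in>{0<..1}.
      ennreal c1 * emeasure M (cball x r) / ennreal (r powr \<theta>) \<le> hmeasure M \<theta> (cball x r \<inter> S) \<and>
      hmeasure M \<theta> (cball x r \<inter> S) \<le> ennreal c2 * emeasure M (cball x r) / ennreal (r powr \<theta>)}"

definition LCR :: "'a::metric_space measure \<Rightarrow> real \<Rightarrow> 'a set set" where
  "LCR M \<theta> = {S. \<exists>lam>0. \<forall>x\<in>S. \<forall>r\<in>{0<..1}.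
      hcontent M \<theta> r (cball x r \<inter> S) \<ge> ennreal lam * emeasure M (cball x r) / ennreal (r powr \<theta>)}"

end

theory Submission imports Defs "HOL-Library.Nat_Bijection" begin

lemma summ_ennreal[simp]: "(f::'b \<Rightarrow> ennreal) summable_on A"
  by (rule nonneg_summable_on_complete) auto

lemma infsum_cmult_ennreal:
  fixes f :: "'b \<Rightarrow> ennreal"
  assumes "c < top"
  shows "infsum (\<lambda>i. c * f i) A = c * infsum f A"
proof -
  have "((\<lambda>y. c * y) \<circ> f has_sum c * infsum f A) A"
    by (rule has_sum_comm_additive_general)
       (auto simp: sum_distrib_left intro!: ennreal_tendsto_cmult assms tendsto_ident_at has_sum_infsum)
  then show ?thesis by (simp add: infsumI o_def)
qed

lemma infsum_geom_ennreal:
  assumes "e > 0"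
  shows "infsum (\<lambda>i::nat. ennreal (e * (1/2)^Suc i)) A \<le> ennreal e"
proof -
  have s: "(\<lambda>i::nat. e * (1/2)^Suc i) sums (e * 1)"
    by (intro sums_mult power_half_series)
  have h: "((\<lambda>i::nat. e * (1/2)^Suc i) has_sum e) UNIV"
    using sums_nonneg_imp_has_sum[OF s] assms by simp
  have "(ennreal \<circ> (\<lambda>i::nat. e * (1/2)^Suc i) has_sum ennreal e) UNIV"
    by (rule has_sum_comm_additive_general[OF _ _ h])
       (use assms in \<open>auto simp: o_def intro!: tendsto_ennrealI tendsto_ident_at\<close>)
  then have "infsum (\<lambda>i::nat. ennreal (e * (1/2)^Suc i)) UNIV = ennreal e"
    by (simp add: infsumI o_def)
  moreover have "infsum (\<lambda>i::nat. ennreal (e * (1/2)^Suc i)) A \<le> infsum (\<lambda>i::nat. ennreal (e * (1/2)^Suc i)) UNIV"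
    by (rule infsum_mono_neutral) auto
  ultimately show ?thesis by simp
qed

lemma infsum_single_le_ennreal:
  fixes f :: "'b \<Rightarrow> ennreal"
  assumes "i \<in> A"
  shows "f i \<le> infsum f A"
proof -
  have "infsum f {i} \<le> infsum f A"
    by (rule infsum_mono_neutral) (use assms in auto)
  then show ?thesis by simp
qed

lemma sum_le_infsum_ennreal:
  fixes f :: "'b \<Rightarrow> ennreal"
  assumes "finite F" "F \<subseteq> A"
  shows "sum f F \<le> infsum f A"
proof -
  have "infsum f A = (SUP F\<in>{F. finite F \<and> F\<subseteq>A}. sum f F)"
    by (rule nonneg_infsum_complete) auto
  then show ?thesis using assms by (auto intro!: SUP_upper)
qed

lemma infsum_Sigma_le_ennreal:
  fixes f :: "'a \<Rightarrow> 'b \<Rightarrow> ennreal"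
  shows "infsum (\<lambda>(i,j). f i j) (Sigma A B) \<le> infsum (\<lambda>i. infsum (f i) (B i)) A"
proof -
  have "infsum (\<lambda>(i,j). f i j) (Sigma A B) = (SUP F\<in>{F. finite F \<and> F\<subseteq>Sigma A B}. sum (\<lambda>(i,j). f i j) F)"
    by (rule nonneg_infsum_complete) auto
  also have "\<dots> \<le> infsum (\<lambda>i. infsum (f i) (B i)) A"
  proof (rule SUP_least)
    fix F assume F: "F \<in> {F. finite F \<and> F\<subseteq>Sigma A B}"
    define A' where "A' = fst ` F"
    define B' where "B' i = {j. (i,j) \<in> F}" for i
    have fin: "finite A'" using F by (auto simp: A'_def)
    have finB: "finite (B' i)" for i
    proof -
      have "B' i \<subseteq> snd ` F" by (force simp: B'_def)
      then show ?thesis using F finite_subset by blast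
    qed
    have FS: "F = Sigma A' B'" by (force simp: A'_def B'_def)
    have "sum (\<lambda>(i,j). f i j) F = (\<Sum>i\<in>A'. sum (f i) (B' i))"
      unfolding FS by (rule sum.Sigma[symmetric]) (use fin finB in auto)
    also have "\<dots> \<le> (\<Sum>i\<in>A'. infsum (f i) (B i))"
      by (rule sum_mono, rule sum_le_infsum_ennreal) (use F finB in \<open>auto simp: A'_def B'_def\<close>)
    also have "\<dots> \<le> infsum (\<lambda>i. infsum (f i) (B i)) A"
      by (rule sum_le_infsum_ennreal) (use F fin in \<open>auto simp: A'_def\<close>)
    finally show "sum (\<lambda>(i,j). f i j) F \<le> infsum (\<lambda>i. infsum (f i) (B i)) A" .
  qed
  finally show ?thesis .
qed


definition covers :: "real \<Rightarrow> 'a::metric_space set \<Rightarrow> (nat set \<times> (nat \<Rightarrow> 'a) \<times> (nat \<Rightarrow> real)) set" where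
  "covers \<delta> E = {(I, x, r). (\<forall>i\<in>I. 0 < r i \<and> r i < \<delta>) \<and> E \<subseteq> (\<Union>i\<in>I. cball (x i) (r i))}"

definition cost :: "'a::metric_space measure \<Rightarrow> real \<Rightarrow> (nat set \<times> (nat \<Rightarrow> 'a) \<times> (nat \<Rightarrow> real)) \<Rightarrow> ennreal" where
  "cost M \<theta> c = (case c of (I, x, r) \<Rightarrow>
     (\<Sum>\<^sub>\<infinity> i\<in>I. emeasure M (cball (x i) (r i)) / ennreal (r i powr \<theta>)))"

lemma hcontent_alt: "hcontent M \<theta> \<delta> E = (INF c\<in>covers \<delta> E. cost M \<theta> c)"
  unfolding hcontent_def covers_def cost_def by simp

lemma hcontent_le_cost: "c \<in> covers \<delta> E \<Longrightarrow> hcontent M \<theta> \<delta> E \<le> cost M \<theta> c"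
  unfolding hcontent_alt by (rule INF_lower)

lemma hcontent_mono: "E \<subseteq> F \<Longrightarrow> hcontent M \<theta> \<delta> E \<le> hcontent M \<theta> \<delta> F"
  unfolding hcontent_alt by (rule INF_superset_mono) (auto simp: covers_def)

lemma hcontent_empty: "hcontent M \<theta> \<delta> {} = 0"
proof -
  have "hcontent M \<theta> \<delta> {} \<le> cost M \<theta> ({}, undefined, undefined)"
    by (rule hcontent_le_cost) (auto simp: covers_def)
  then show ?thesis by (simp add: cost_def)
qed

lemma hmeasure_mono: "E \<subseteq> F \<Longrightarrow> hmeasure M \<theta> E \<le> hmeasure M \<theta> F"
  unfolding hmeasure_def by (rule SUP_mono) (auto intro: hcontent_mono)

lemma hmeasure_empty: "hmeasure M \<theta> {} = 0"
  unfolding hmeasure_def by (simp add: hcontent_empty)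

lemma hcontent_le_hmeasure: "\<delta> > 0 \<Longrightarrow> hcontent M \<theta> \<delta> E \<le> hmeasure M \<theta> E"
  unfolding hmeasure_def by (rule SUP_upper) auto


lemma ennreal_less_add_pos: "(a::ennreal) < top \<Longrightarrow> 0 < e \<Longrightarrow> a < a + ennreal e"
proof -
  assume a: "a < top" and e: "0 < e"
  obtain a' where a': "a = ennreal a'" "0 \<le> a'" using a by (cases a rule: ennreal_cases) auto
  have "ennreal a' < ennreal (a' + e)" using a' e by (simp add: ennreal_less_iff)
  then show ?thesis using a' e by (simp add: ennreal_plus)
qed

lemma hcontent_subadd:
  fixes A :: "nat \<Rightarrow> 'a::metric_space set"
  assumes E: "E \<subseteq> (\<Union>i\<in>I. A i)"
  shows "hcontent M \<theta> \<delta> E \<le> infsum (\<lambda>i. hcontent M \<theta> \<delta> (A i)) I"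
proof (rule ennreal_le_epsilon)
  fix e :: real
  assume fin: "infsum (\<lambda>i. hcontent M \<theta> \<delta> (A i)) I < top" and e: "0 < e"
  define eps where "eps i = e * (1/2)^Suc i" for i :: nat
  have eps_pos: "0 < eps i" for i using e by (simp add: eps_def)
  have "\<forall>i\<in>I. \<exists>c. c \<in> covers \<delta> (A i) \<and> cost M \<theta> c < hcontent M \<theta> \<delta> (A i) + ennreal (eps i)"
  proof
    fix i assume i: "i \<in> I"
    have "hcontent M \<theta> \<delta> (A i) \<le> infsum (\<lambda>i. hcontent M \<theta> \<delta> (A i)) I"
      using i by (rule infsum_single_le_ennreal)
    then have "hcontent M \<theta> \<delta> (A i) < top" using fin by auto
    then have "hcontent M \<theta> \<delta> (A i) < hcontent M \<theta> \<delta> (A i) + ennreal (eps i)"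
      using eps_pos by (rule ennreal_less_add_pos)
    moreover define v where "v = hcontent M \<theta> \<delta> (A i) + ennreal (eps i)"
    ultimately have "hcontent M \<theta> \<delta> (A i) < v" by simp
    then have "(INF c\<in>covers \<delta> (A i). cost M \<theta> c) < v" by (simp only: hcontent_alt)
    then have "\<exists>c\<in>covers \<delta> (A i). cost M \<theta> c < v" by (simp only: INF_less_iff)
    then show "\<exists>c. c \<in> covers \<delta> (A i) \<and> cost M \<theta> c < hcontent M \<theta> \<delta> (A i) + ennreal (eps i)"
      unfolding v_def by blast
  qed
  from bchoice[OF this] obtain C where C0: "\<forall>i\<in>I. C i \<in> covers \<delta> (A i) \<and> cost M \<theta> (C i) < hcontent M \<theta> \<delta> (A i) + ennreal (eps i)"
    by blast
  have C: "\<And>i. i \<in> I \<Longrightarrow> C i \<in> covers \<delta> (A i)"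
      "\<And>i. i \<in> I \<Longrightarrow> cost M \<theta> (C i) < hcontent M \<theta> \<delta> (A i) + ennreal (eps i)"
    using C0 by auto
  define J where "J i = fst (C i)" for i
  define X where "X i = fst (snd (C i))" for i
  define R where "R i = snd (snd (C i))" for i
  have CJ: "C i = (J i, X i, R i)" for i by (simp add: J_def X_def R_def)
  have cov: "\<And>j. j \<in> J i \<Longrightarrow> 0 < R i j \<and> R i j < \<delta>" "A i \<subseteq> (\<Union>j\<in>J i. cball (X i j) (R i j))"
    if "i \<in> I" for i
    using C(1)[OF that] unfolding CJ covers_def by auto
  define N where "N = prod_encode ` Sigma I J"
  define x' where "x' n = X (fst (prod_decode n)) (snd (prod_decode n))" for n
  define r' where "r' n = R (fst (prod_decode n)) (snd (prod_decode n))" for n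
  have "(N, x', r') \<in> covers \<delta> E"
    unfolding covers_def
  proof (clarsimp, intro conjI)
    show "\<forall>n\<in>N. 0 < r' n \<and> r' n < \<delta>"
      using cov(1) by (auto simp: N_def r'_def)
    show "E \<subseteq> (\<Union>n\<in>N. cball (x' n) (r' n))"
    proof
      fix z assume "z \<in> E"
      then obtain i where i: "i \<in> I" "z \<in> A i" using E by auto
      then obtain j where j: "j \<in> J i" "z \<in> cball (X i j) (R i j)" using cov(2)[OF i(1)] by auto
      have "prod_encode (i,j) \<in> N" using i j by (auto simp: N_def)
      moreover have "z \<in> cball (x' (prod_encode (i,j))) (r' (prod_encode (i,j)))"
        using j by (simp add: x'_def r'_def)
      ultimately show "z \<in> (\<Union>n\<in>N. cball (x' n) (r' n))" by blast
    qed
  qed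
  then have "hcontent M \<theta> \<delta> E \<le> cost M \<theta> (N, x', r')" by (rule hcontent_le_cost)
  also have "\<dots> = infsum (\<lambda>(i,j). emeasure M (cball (X i j) (R i j)) / ennreal (R i j powr \<theta>)) (Sigma I J)"
  proof -
    define g where "g n = emeasure M (cball (x' n) (r' n)) / ennreal (r' n powr \<theta>)" for n
    have "cost M \<theta> (N, x', r') = infsum g (prod_encode ` Sigma I J)"
      by (simp add: cost_def N_def g_def[abs_def])
    also have "\<dots> = infsum (g \<circ> prod_encode) (Sigma I J)"
      by (rule infsum_reindex[OF inj_prod_encode])
    also have "g \<circ> prod_encode = (\<lambda>(i,j). emeasure M (cball (X i j) (R i j)) / ennreal (R i j powr \<theta>))"
      by (auto simp: fun_eq_iff g_def x'_def r'_def)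
    finally show ?thesis .
  qed
  also have "\<dots> \<le> infsum (\<lambda>i. infsum (\<lambda>j. emeasure M (cball (X i j) (R i j)) / ennreal (R i j powr \<theta>)) (J i)) I"
    by (rule infsum_Sigma_le_ennreal[where f="\<lambda>i j. emeasure M (cball (X i j) (R i j)) / ennreal (R i j powr \<theta>)"])
  also have "\<dots> = infsum (\<lambda>i. cost M \<theta> (C i)) I"
    by (simp add: CJ cost_def)
  also have "\<dots> \<le> infsum (\<lambda>i. hcontent M \<theta> \<delta> (A i) + ennreal (eps i)) I"
    by (rule infsum_mono) (auto intro: less_imp_le C(2))
  also have "\<dots> = infsum (\<lambda>i. hcontent M \<theta> \<delta> (A i)) I + infsum (\<lambda>i. ennreal (eps i)) I"
    by (rule infsum_add) auto
  also have "\<dots> \<le> infsum (\<lambda>i. hcontent M \<theta> \<delta> (A i)) I + ennreal e"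
    by (rule add_left_mono) (unfold eps_def, rule infsum_geom_ennreal[OF e])
  finally show "hcontent M \<theta> \<delta> E \<le> infsum (\<lambda>i. hcontent M \<theta> \<delta> (A i)) I + ennreal e" .
qed

lemma hmeasure_subadd:
  fixes A :: "nat \<Rightarrow> 'a::metric_space set"
  assumes E: "E \<subseteq> (\<Union>i\<in>I. A i)"
  shows "hmeasure M \<theta> E \<le> infsum (\<lambda>i. hmeasure M \<theta> (A i)) I"
  unfolding hmeasure_def[of M \<theta> E]
proof (rule SUP_least)
  fix \<delta> :: real assume d: "\<delta> \<in> {0<..}"
  have "hcontent M \<theta> \<delta> E \<le> infsum (\<lambda>i. hcontent M \<theta> \<delta> (A i)) I"
    by (rule hcontent_subadd[OF E])
  also have "\<dots> \<le> infsum (\<lambda>i. hmeasure M \<theta> (A i)) I"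
    by (rule infsum_mono) (use d in \<open>auto intro: hcontent_le_hmeasure\<close>)
  finally show "hcontent M \<theta> \<delta> E \<le> infsum (\<lambda>i. hmeasure M \<theta> (A i)) I" .
qed


theorem mainTheorem7:
  fixes M :: "'a::polish_space measure" and \<theta> :: real
  assumes "mms M" and "unif_loc_doubling M" and "\<theta> \<ge> 0"
  shows "ADR M \<theta> \<subseteq> LCR M \<theta>"
proof
  have sets: "sets M = sets borel" and pos: "\<And>x r. r > 0 \<Longrightarrow> 0 < emeasure M (cball x r)"
    and fin: "\<And>x r. r > 0 \<Longrightarrow> emeasure M (cball x r) < \<infinity>"
    using assms(1) unfolding mms_def by auto
  define m where "m y s = measure M (cball y s)" for y s
  have em: "emeasure M (cball y s) = ennreal (m y s)" if "s > 0" for y s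
    unfolding m_def using fin[OF that, of y] by (intro emeasure_eq_ennreal_measure) auto
  have mpos: "0 < m y s" if "s > 0" for y s
    using pos[OF that, of y] em[OF that, of y] by simp
  have mmono: "m y s \<le> m z t" if "0 < s" "0 < t" "cball y s \<subseteq> cball z t" for y z s t
  proof -
    have "cball z t \<in> sets M" using sets by (simp add: borel_closed)
    then have "emeasure M (cball y s) \<le> emeasure M (cball z t)"
      by (rule emeasure_mono[OF that(3)])
    then show ?thesis using em that mpos[OF that(2)] by (simp add: ennreal_le_iff less_imp_le)
  qed
  obtain C where C: "\<And>r x. r \<in> {0<..4} \<Longrightarrow> m x (2*r) / m x r \<le> C"
    using assms(2) unfolding unif_loc_doubling_def m_def
    by (metis (no_types, lifting) zero_less_numeral)
  define D where "D = max C 1"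
  have D1: "D \<ge> 1" by (simp add: D_def)
  have dbl: "m y (2*u) \<le> D * m y u" if "0 < u" "u \<le> 4" for y u
  proof -
    have "m y (2*u) / m y u \<le> D" using C[of u y] that by (simp add: D_def)
    then show ?thesis using mpos[OF that(1), of y] by (simp add: divide_le_eq mult.commute)
  qed
  have dbl3: "m y (8*\<rho>) \<le> D^3 * m y \<rho>" if "0 < \<rho>" "\<rho> \<le> 1" for y \<rho>
  proof -
    have "m y (8*\<rho>) = m y (2*(4*\<rho>))" by simp
    also have "\<dots> \<le> D * m y (4*\<rho>)" using that by (intro dbl) auto
    also have "m y (4*\<rho>) = m y (2*(2*\<rho>))" by simp
    also have "\<dots> \<le> D * m y (2*\<rho>)" using that by (intro dbl) auto
    also have "\<dots> \<le> D * (D * m y \<rho>)" using that D1 by (intro mult_left_mono dbl) auto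
    finally have "m y (8*\<rho>) \<le> D * (D * (D * m y \<rho>))" using D1 by (simp add: mult_left_mono)
    then show ?thesis by (simp add: power3_eq_cube mult.assoc)
  qed
  fix S assume "S \<in> ADR M \<theta>"
  then obtain c1 c2 where c1: "c1 > 0" and c2: "c2 > 0" and adr: "\<And>x r. x \<in> S \<Longrightarrow> r \<in> {0<..1} \<Longrightarrow>
      ennreal c1 * emeasure M (cball x r) / ennreal (r powr \<theta>) \<le> hmeasure M \<theta> (cball x r \<inter> S) \<and>
      hmeasure M \<theta> (cball x r \<inter> S) \<le> ennreal c2 * emeasure M (cball x r) / ennreal (r powr \<theta>)"
    unfolding ADR_def by blast
  define K where "K = c2 * D^3"
  have K: "K > 0" using c2 D1 by (simp add: K_def)
  have adr_up: "hmeasure M \<theta> (cball x r \<inter> S) \<le> ennreal (c2 * m x r / r powr \<theta>)"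
    if "x \<in> S" "0 < r" "r \<le> 1" for x r
  proof -
    have "hmeasure M \<theta> (cball x r \<inter> S) \<le> ennreal c2 * emeasure M (cball x r) / ennreal (r powr \<theta>)"
      using adr[of x r] that by auto
    also have "\<dots> = ennreal (c2 * m x r / r powr \<theta>)"
      using that c2 mpos[OF that(2), of x]
      by (simp add: em ennreal_mult[symmetric] divide_ennreal)
    finally show ?thesis .
  qed
  have adr_low: "ennreal (c1 * m x r / r powr \<theta>) \<le> hmeasure M \<theta> (cball x r \<inter> S)"
    if "x \<in> S" "0 < r" "r \<le> 1" for x r
  proof -
    have "ennreal (c1 * m x r / r powr \<theta>) = ennreal c1 * emeasure M (cball x r) / ennreal (r powr \<theta>)"
      using that c1 mpos[OF that(2), of x]
      by (simp add: em ennreal_mult[symmetric] divide_ennreal)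
    also have "\<dots> \<le> hmeasure M \<theta> (cball x r \<inter> S)"
      using adr[of x r] that by auto
    finally show ?thesis .
  qed
  have realb: "c2 * a / q \<le> K * (m y0 \<rho> / \<rho> powr \<theta>)"
    if "0 < \<rho>" "\<rho> \<le> 1" "0 \<le> a" "a \<le> m y0 (8*\<rho>)" "\<rho> powr \<theta> \<le> q" for a q y0 \<rho>
  proof -
    have "c2 * a \<le> K * m y0 \<rho>"
      unfolding K_def mult.assoc using c2 that dbl3[OF that(1,2), of y0]
      by (intro mult_left_mono) auto
    moreover have "0 < \<rho> powr \<theta>" using that(1) by simp
    ultimately have "c2 * a / q \<le> K * m y0 \<rho> / \<rho> powr \<theta>"
      using that K mpos[OF that(1), of y0] c2 by (intro frac_le) auto
    then show ?thesis by simp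
  qed
  show "S \<in> LCR M \<theta>"
    unfolding LCR_def
  proof (intro CollectI exI[of _ "c1 / K"] conjI ballI)
    show "0 < c1 / K" using c1 K by simp
    fix x r assume x: "x \<in> S" and r: "r \<in> {0<..1::real}"
    define E where "E = cball x r \<inter> S"
    have r0: "0 < r" and r1: "r \<le> 1" using r by auto
    show "ennreal (c1 / K) * emeasure M (cball x r) / ennreal (r powr \<theta>) \<le> hcontent M \<theta> r (cball x r \<inter> S)"
      unfolding hcontent_alt
    proof (rule INF_greatest)
      fix c assume c: "c \<in> covers r (cball x r \<inter> S)"
      obtain I xs rs where cI: "c = (I, xs, rs)" by (cases c) auto
      have rad: "\<And>i. i \<in> I \<Longrightarrow> 0 < rs i \<and> rs i < r" and covE: "E \<subseteq> (\<Union>i\<in>I. cball (xs i) (rs i))"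
        using c unfolding cI covers_def E_def by auto
      define t where "t i = emeasure M (cball (xs i) (rs i)) / ennreal (rs i powr \<theta>)" for i
      have piece: "hmeasure M \<theta> (cball (xs i) (rs i) \<inter> E) \<le> ennreal K * t i" if i: "i \<in> I" for i
      proof -
        define \<rho> where "\<rho> = rs i"
        define y0 where "y0 = xs i"
        have \<rho>: "0 < \<rho>" "\<rho> < r" using rad[OF i] by (auto simp: \<rho>_def)
        have tK: "ennreal K * t i = ennreal (K * (m y0 \<rho> / \<rho> powr \<theta>))"
          using \<rho> K mpos[OF \<rho>(1), of y0]
          by (simp add: t_def \<rho>_def[symmetric] y0_def[symmetric] em ennreal_mult[symmetric] divide_ennreal)
        show ?thesis
        proof (cases "cball y0 \<rho> \<inter> E = {}")
          case True
          then show ?thesis by (simp add: \<rho>_def y0_def hmeasure_empty)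
        next
          case False
          then obtain z where z: "dist y0 z \<le> \<rho>" "dist x z \<le> r" "z \<in> S" by (auto simp: E_def)
          show ?thesis
          proof (cases "2*\<rho> \<le> r")
            case True
            have "hmeasure M \<theta> (cball y0 \<rho> \<inter> E) \<le> hmeasure M \<theta> (cball z (2*\<rho>) \<inter> S)"
            proof (rule hmeasure_mono, rule subsetI)
              fix w assume "w \<in> cball y0 \<rho> \<inter> E"
              then have "dist y0 w \<le> \<rho>" "w \<in> S" by (auto simp: E_def)
              then show "w \<in> cball z (2*\<rho>) \<inter> S"
                using z(1) dist_triangle[of z w y0] by (simp add: dist_commute)
            qed
            also have "\<dots> \<le> ennreal (c2 * m z (2*\<rho>) / (2*\<rho>) powr \<theta>)"
              using adr_up[of z "2*\<rho>"] z \<rho> True r1 by auto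
            also have "\<dots> \<le> ennreal (K * (m y0 \<rho> / \<rho> powr \<theta>))"
            proof (rule ennreal_leI, rule realb)
              show "0 \<le> m z (2*\<rho>)" using mpos[of "2*\<rho>" z] \<rho> by simp
              show "m z (2*\<rho>) \<le> m y0 (8*\<rho>)"
              proof (rule mmono)
                show "cball z (2*\<rho>) \<subseteq> cball y0 (8*\<rho>)"
                proof
                  fix w assume "w \<in> cball z (2*\<rho>)"
                  then show "w \<in> cball y0 (8*\<rho>)"
                    using z(1) dist_triangle[of y0 w z] \<rho> by auto
                qed
              qed (use \<rho> in auto)
              show "\<rho> powr \<theta> \<le> (2*\<rho>) powr \<theta>"
                using \<rho> assms(3) by (intro powr_mono2) auto
            qed (use \<rho> r1 in auto)
            finally show ?thesis using tK by (simp add: \<rho>_def y0_def)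
          next
            case False
            have "hmeasure M \<theta> (cball y0 \<rho> \<inter> E) \<le> hmeasure M \<theta> (cball x r \<inter> S)"
              by (rule hmeasure_mono) (auto simp: E_def)
            also have "\<dots> \<le> ennreal (c2 * m x r / r powr \<theta>)"
              using adr_up[of x r] x r0 r1 by auto
            also have "\<dots> \<le> ennreal (K * (m y0 \<rho> / \<rho> powr \<theta>))"
            proof (rule ennreal_leI, rule realb)
              show "0 \<le> m x r" using mpos[of r x] r0 by simp
              show "m x r \<le> m y0 (8*\<rho>)"
              proof (rule mmono)
                show "cball x r \<subseteq> cball y0 (8*\<rho>)"
                proof
                  fix w assume "w \<in> cball x r"
                  then show "w \<in> cball y0 (8*\<rho>)"
                    using z(1,2) dist_triangle[of y0 w z] dist_triangle[of z w x] \<rho> False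
                    by (auto simp: dist_commute)
                qed
              qed (use \<rho> r0 in auto)
              show "\<rho> powr \<theta> \<le> r powr \<theta>"
                using \<rho> assms(3) by (intro powr_mono2) auto
            qed (use \<rho> r1 in auto)
            finally show ?thesis using tK by (simp add: \<rho>_def y0_def)
          qed
        qed
      qed
      have "ennreal (c1 * m x r / r powr \<theta>) \<le> hmeasure M \<theta> E"
        using adr_low[OF x r0 r1] by (simp add: E_def)
      also have "\<dots> \<le> infsum (\<lambda>i. hmeasure M \<theta> (cball (xs i) (rs i) \<inter> E)) I"
        by (rule hmeasure_subadd) (use covE in auto)
      also have "\<dots> \<le> infsum (\<lambda>i. ennreal K * t i) I"
        by (rule infsum_mono) (auto intro: piece)
      also have "\<dots> = ennreal K * cost M \<theta> c"
        by (simp add: infsum_cmult_ennreal cI cost_def t_def)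
      finally have main: "ennreal (c1 * m x r / r powr \<theta>) \<le> ennreal K * cost M \<theta> c" .
      have "ennreal (c1 / K) * emeasure M (cball x r) / ennreal (r powr \<theta>)
          = ennreal (1/K) * ennreal (c1 * m x r / r powr \<theta>)"
        using c1 K r0 mpos[OF r0, of x]
        by (simp add: em ennreal_mult[symmetric] divide_ennreal)
      also have "\<dots> \<le> ennreal (1/K) * (ennreal K * cost M \<theta> c)"
        by (rule mult_left_mono[OF main]) simp
      also have "\<dots> = cost M \<theta> c"
        using K by (simp add: mult.assoc[symmetric] ennreal_mult[symmetric])
      finally show "ennreal (c1 / K) * emeasure M (cball x r) / ennreal (r powr \<theta>) \<le> cost M \<theta> c" .
    qed
  qed
qed

end
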